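(* Let $(\Gamma,g)$ be a vertex-weighted metric graph of genus $g(\Gamma)$, and let $F$ be a tropical meromorphic function on $\Gamma$ with $\operatorname{div}(F)+K_\Gamma\geq0$. Then for every $x\in\Gamma$ and every tangent direction $v$ at $x$, $|d_vF(x)|\leq2g(\Gamma)-1$. If $K_\Gamma$ is effective (i.e. $\Gamma$ has no genus-zero leaves), then $|d_vF(x)|\leq2g(\Gamma)-2$.
   Context: A vertex-weighted metric graph is a compact connected metric graph with finite vertex set and weights $g(x)\in\mathbb{Z}_{\geq0}$ on vertices; non-vertices have weight $0$ and valency $\deg(x)=2$. Genus: $g(\Gamma)=h_1(\Gamma)+\sum_xg(x)$. Canonical divisor: $K_\Gamma=\sum_x(2g(x)-2+\deg(x))(x)$. A genus-zero leaf is a vertex of weight $0$ and valency $1$. A tropical meromorphic function is a continuous piecewise affine function $\Gamma\to\mathbb{R}$ with integer slopes; $d_vF(x)$ is the slope of $F$ at $x$ in direction $v$, and $\operatorname{div}(F)=\sum_x\operatorname{ord}_x(F)(x)$ with $\operatorname{ord}_x(F)=-\sum_vd_vF(x)$, the sum over tangent directions at $x$. *)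

theory Defs
  imports "HOL-Analysis.Analysis"
begin

(* A vertex-weighted metric graph, given by a finite model: finite vertex set,
   finite edge set (loops and multi-edges allowed), each edge e is a segment
   [0, len e] glued at 0 to src e and at len e to tgt e; wt is the vertex weight. *)
record ('v, 'e) wmgraph =
  verts :: "'v set"
  edges :: "'e set"
  src   :: "'e \<Rightarrow> 'v"
  tgt   :: "'e \<Rightarrow> 'v"
  len   :: "'e \<Rightarrow> real"
  wt    :: "'v \<Rightarrow> nat"

definition adj :: "('v, 'e) wmgraph \<Rightarrow> 'v \<Rightarrow> 'v \<Rightarrow> bool" where
  "adj G a b \<longleftrightarrow> (\<exists>e\<in>edges G. (src G e = a \<and> tgt G e = b) \<or> (src G e = b \<and> tgt G e = a))"

definition metric_graph :: "('v, 'e) wmgraph \<Rightarrow> bool" where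
  "metric_graph G \<longleftrightarrow>
     finite (verts G) \<and> verts G \<noteq> {} \<and> finite (edges G) \<and>
     (\<forall>e\<in>edges G. src G e \<in> verts G \<and> tgt G e \<in> verts G \<and> len G e > 0) \<and>
     (\<forall>a\<in>verts G. \<forall>b\<in>verts G. (adj G)\<^sup>*\<^sup>* a b)"

datatype ('v, 'e) point = Vert 'v | EPt 'e real

definition points :: "('v, 'e) wmgraph \<Rightarrow> ('v, 'e) point set" where
  "points G = Vert ` verts G \<union> {EPt e t | e t. e \<in> edges G \<and> 0 < t \<and> t < len G e}"

definition on_edge :: "('v, 'e) wmgraph \<Rightarrow> (('v, 'e) point \<Rightarrow> real) \<Rightarrow> 'e \<Rightarrow> real \<Rightarrow> real" where
  "on_edge G F e t = (if t = 0 then F (Vert (src G e))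
                      else if t = len G e then F (Vert (tgt G e)) else F (EPt e t))"

definition pw_affine_int :: "real \<Rightarrow> (real \<Rightarrow> real) \<Rightarrow> bool" where
  "pw_affine_int L f \<longleftrightarrow>
     (\<exists>(n::nat) (a::nat \<Rightarrow> real). a 0 = 0 \<and> a n = L \<and> (\<forall>i<n. a i < a (Suc i)) \<and>
        (\<forall>i<n. \<exists>(m::int) (c::real). \<forall>t\<in>{a i..a (Suc i)}. f t = of_int m * t + c))"

definition trop_mero :: "('v, 'e) wmgraph \<Rightarrow> (('v, 'e) point \<Rightarrow> real) \<Rightarrow> bool" where
  "trop_mero G F \<longleftrightarrow> (\<forall>e\<in>edges G. pw_affine_int (len G e) (on_edge G F e))"

definition rslope :: "(real \<Rightarrow> real) \<Rightarrow> real \<Rightarrow> real" where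
  "rslope f t = (THE m. \<exists>\<epsilon>>0. \<forall>s\<in>{t..t+\<epsilon>}. f s = f t + m * (s - t))"

definition lslope :: "(real \<Rightarrow> real) \<Rightarrow> real \<Rightarrow> real" where
  "lslope f t = (THE m. \<exists>\<epsilon>>0. \<forall>s\<in>{t-\<epsilon>..t}. f s = f t + m * (s - t))"

(* tangent directions: (e, True) = along e in increasing parameter,
   (e, False) = along e in decreasing parameter *)
definition tdirs :: "('v, 'e) wmgraph \<Rightarrow> ('v, 'e) point \<Rightarrow> ('e \<times> bool) set" where
  "tdirs G x = (case x of
      Vert v \<Rightarrow> {(e, True) | e. e \<in> edges G \<and> src G e = v}
               \<union> {(e, False) | e. e \<in> edges G \<and> tgt G e = v}
    | EPt e t \<Rightarrow> {(e, True), (e, False)})"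

definition param :: "('v, 'e) wmgraph \<Rightarrow> ('v, 'e) point \<Rightarrow> 'e \<times> bool \<Rightarrow> real" where
  "param G x d = (case x of Vert v \<Rightarrow> (if snd d then 0 else len G (fst d)) | EPt e t \<Rightarrow> t)"

definition dslope :: "('v, 'e) wmgraph \<Rightarrow> (('v, 'e) point \<Rightarrow> real) \<Rightarrow> ('v, 'e) point \<Rightarrow> 'e \<times> bool \<Rightarrow> real" where
  "dslope G F x d = (if snd d then rslope (on_edge G F (fst d)) (param G x d)
                     else - lslope (on_edge G F (fst d)) (param G x d))"

(* valency (loops counted twice) *)
definition valency :: "('v, 'e) wmgraph \<Rightarrow> ('v, 'e) point \<Rightarrow> nat" where
  "valency G x = card (tdirs G x)"

definition ord :: "('v, 'e) wmgraph \<Rightarrow> (('v, 'e) point \<Rightarrow> real) \<Rightarrow> ('v, 'e) point \<Rightarrow> real" where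
  "ord G F x = - (\<Sum>d\<in>tdirs G x. dslope G F x d)"

definition weight :: "('v, 'e) wmgraph \<Rightarrow> ('v, 'e) point \<Rightarrow> nat" where
  "weight G x = (case x of Vert v \<Rightarrow> wt G v | EPt e t \<Rightarrow> 0)"

definition canon :: "('v, 'e) wmgraph \<Rightarrow> ('v, 'e) point \<Rightarrow> int" where
  "canon G x = 2 * int (weight G x) - 2 + int (valency G x)"

(* genus g(Gamma) = h_1(Gamma) + sum of weights; h_1 = |E| - |V| + 1 (connected) *)
definition genus :: "('v, 'e) wmgraph \<Rightarrow> int" where
  "genus G = int (card (edges G)) - int (card (verts G)) + 1 + int (\<Sum>v\<in>verts G. wt G v)"

end

theory Submission
  imports Defs
begin


lemma sum_swap_src:
  fixes h :: "'q \<Rightarrow> int"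
  assumes "finite E" "finite S"
  shows "(\<Sum>u\<in>S. (\<Sum>q\<in>E. (if t q = u then g q else 0) + (if s q = u then h q else 0)))
       = (\<Sum>q\<in>E. (if t q \<in> S then g q else 0) + (if s q \<in> S then h q else 0))"
proof -
  have "(\<Sum>u\<in>S. (\<Sum>q\<in>E. (if t q = u then g q else 0) + (if s q = u then h q else 0)))
      = (\<Sum>q\<in>E. \<Sum>u\<in>S. (if t q = u then g q else 0) + (if s q = u then h q else 0))"
    by (rule sum.swap)
  also have "\<dots> = (\<Sum>q\<in>E. (if t q \<in> S then g q else 0) + (if s q \<in> S then h q else 0))"
    by (simp add: sum.distrib assms)
  finally show ?thesis .
qed

lemma card_le_touch:
  fixes s t :: "'q \<Rightarrow> 'p"
  assumes finV: "finite V" and finE: "finite E"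
    and st: "\<forall>q\<in>E. s q \<in> V \<and> t q \<in> V"
    and conn: "\<forall>a\<in>V. \<forall>b\<in>V. (\<lambda>x y. \<exists>q\<in>E. (s q = x \<and> t q = y) \<or> (s q = y \<and> t q = x))\<^sup>*\<^sup>* a b"
    and BV: "B \<subseteq> V" and Bne: "B \<noteq> {}"
  shows "card (V - B) \<le> card {q\<in>E. s q \<in> V - B \<or> t q \<in> V - B}"
proof -
  define R where "R = (\<lambda>x y. \<exists>q\<in>E. (s q = x \<and> t q = y) \<or> (s q = y \<and> t q = x))"
  define d where "d x = (LEAST k. \<exists>b\<in>B. (R ^^ k) x b)" for x
  obtain b0 where b0: "b0 \<in> B" using Bne by auto
  have ex: "\<exists>k. \<exists>b\<in>B. (R ^^ k) x b" if "x \<in> V" for x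
  proof -
    have "R\<^sup>*\<^sup>* x b0" using conn that b0 BV unfolding R_def by auto
    then obtain k where "(R ^^ k) x b0" using rtranclp_imp_relpowp by metis
    thus ?thesis using b0 by auto
  qed
  have step: "\<exists>q\<in>E. \<exists>c. ((s q = a \<and> t q = c) \<or> (s q = c \<and> t q = a)) \<and> d c < d a"
    if a: "a \<in> V - B" for a
  proof -
    have "\<exists>b\<in>B. (R ^^ d a) a b" unfolding d_def using LeastI_ex[where P = "\<lambda>k. \<exists>b\<in>B. (R ^^ k) a b"] ex[of a] a by blast
    then obtain b where b: "b \<in> B" "(R ^^ d a) a b" by auto
    have "d a \<noteq> 0" proof assume "d a = 0" then show False using b a by auto qed
    then obtain k where k: "d a = Suc k" using not0_implies_Suc by blast
    then obtain c where c: "R a c" "(R ^^ k) c b" using b relpowp_Suc_D2 by metis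
    have "d c \<le> k" unfolding d_def using c b by (metis (mono_tags, lifting) Least_le)
    moreover from c(1) obtain q where "q\<in>E" "(s q = a \<and> t q = c) \<or> (s q = c \<and> t q = a)" unfolding R_def by blast
    moreover have "d c < d a" using \<open>d c \<le> k\<close> k by simp
    ultimately show ?thesis by blast
  qed
  define f where "f a = (SOME q. q \<in> E \<and> (\<exists>c. ((s q = a \<and> t q = c) \<or> (s q = c \<and> t q = a)) \<and> d c < d a))" for a
  have fP: "f a \<in> E \<and> (\<exists>c. ((s (f a) = a \<and> t (f a) = c) \<or> (s (f a) = c \<and> t (f a) = a)) \<and> d c < d a)"
    if "a \<in> V - B" for a
    unfolding f_def using someI_ex[OF step[OF that, unfolded Bex_def]] by blast
  have inj: "inj_on f (V - B)"
  proof (rule inj_onI)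
    fix a a' assume a: "a \<in> V - B" and a': "a' \<in> V - B" and eq: "f a = f a'"
    show "a = a'"
    proof (rule ccontr)
      assume ne: "a \<noteq> a'"
      obtain c where c: "(s (f a) = a \<and> t (f a) = c) \<or> (s (f a) = c \<and> t (f a) = a)" "d c < d a"
        using fP[OF a] by blast
      obtain c' where c': "(s (f a) = a' \<and> t (f a) = c') \<or> (s (f a) = c' \<and> t (f a) = a')" "d c' < d a'"
        using fP[OF a'] eq by metis
      from c c' ne show False by auto
    qed
  qed
  have img: "f ` (V - B) \<subseteq> {q\<in>E. s q \<in> V - B \<or> t q \<in> V - B}"
    using fP by fastforce
  show ?thesis by (rule card_inj_on_le[OF inj img]) (use finE in auto)
qed

lemma comb:
  fixes V :: "'p set" and E :: "'q set" and s t :: "'q \<Rightarrow> 'p" and w :: "'p \<Rightarrow> int"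
    and \<sigma> :: "'q \<Rightarrow> int" and \<phi> :: "'p \<Rightarrow> real" and ell :: "'q \<Rightarrow> real"
  assumes finV: "finite V" and finE: "finite E"
    and st: "\<forall>q\<in>E. s q \<in> V \<and> t q \<in> V"
    and slope: "\<forall>q\<in>E. ell q > 0 \<and> \<phi> (t q) - \<phi> (s q) = of_int (\<sigma> q) * ell q"
    and conn: "\<forall>a\<in>V. \<forall>b\<in>V. (\<lambda>x y. \<exists>q\<in>E. (s q = x \<and> t q = y) \<or> (s q = y \<and> t q = x))\<^sup>*\<^sup>* a b"
    and wpos: "\<forall>u\<in>V. w u \<ge> 0"
    and cond: "\<forall>u\<in>V. 0 \<le> (\<Sum>q\<in>E. (if t q = u then \<sigma> q + 1 else 0) + (if s q = u then 1 - \<sigma> q else 0)) + (2 * w u - 2)"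
    and q0: "q0 \<in> E"
  shows "\<bar>\<sigma> q0\<bar> \<le> 2 * (int (card E) - int (card V) + 1 + (\<Sum>u\<in>V. w u)) - 1 \<and>
     ((\<forall>u\<in>V. 0 \<le> (\<Sum>q\<in>E. (if t q = u then 1 else 0) + (if s q = u then 1 else 0)) + (2 * w u - 2))
       \<longrightarrow> \<bar>\<sigma> q0\<bar> \<le> 2 * (int (card E) - int (card V) + 1 + (\<Sum>u\<in>V. w u)) - 2)"
proof -
  have sumS: "(\<Sum>u\<in>S. (\<Sum>q\<in>E. (if t q = u then g q else 0) + (if s q = u then h q else 0)) + (2 * w u - 2))
     = (\<Sum>q\<in>E. (if t q \<in> S then g q else 0) + (if s q \<in> S then h q else 0)) + (\<Sum>u\<in>S. 2 * w u - 2)"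
    if "finite S" for S and g h :: "'q \<Rightarrow> int"
    using sum_swap_src[OF finE that, of t g s h] by (simp add: sum.distrib)
  define g where "g = int (card E) - int (card V) + 1 + (\<Sum>u\<in>V. w u)"
  show ?thesis
  proof (cases "\<sigma> q0 = 0")
    case True
    have "0 \<le> (\<Sum>u\<in>V. (\<Sum>q\<in>E. (if t q = u then \<sigma> q + 1 else 0) + (if s q = u then 1 - \<sigma> q else 0)) + (2 * w u - 2))"
      using cond by (simp add: sum_nonneg)
    also have "\<dots> = (\<Sum>q\<in>E. (if t q \<in> V then \<sigma> q + 1 else 0) + (if s q \<in> V then 1 - \<sigma> q else 0)) + (\<Sum>u\<in>V. 2 * w u - 2)"
      by (rule sumS[OF finV])
    also have "(\<Sum>q\<in>E. (if t q \<in> V then \<sigma> q + 1 else 0) + (if s q \<in> V then 1 - \<sigma> q else 0)) = (\<Sum>q\<in>E. 2)"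
      by (rule sum.cong) (use st in auto)
    finally have "0 \<le> 2 * g - 2" unfolding g_def by (simp add: sum_subtractf sum_distrib_left)
    then show ?thesis using True unfolding g_def by simp
  next
    case False
    define c where "c = min (\<phi> (s q0)) (\<phi> (t q0))"
    define B where "B = {u\<in>V. \<phi> u \<le> c}"
    define A where "A = V - B"
    define T where "T = {q\<in>E. s q \<in> A \<or> t q \<in> A}"
    have BV: "B \<subseteq> V" and finB: "finite B" and finA: "finite A" and finT: "finite T"
      using finV finE unfolding B_def A_def T_def by auto
    have Bne: "B \<noteq> {}" using st q0 unfolding B_def c_def by (cases "\<phi> (s q0) \<le> \<phi> (t q0)") (auto simp: min_def)
    have cardAT: "card A \<le> card T"
      unfolding A_def T_def by (rule card_le_touch[OF finV finE st conn BV Bne])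
    have sgn_pos: "\<sigma> q > 0" if "q \<in> E" "\<phi> (s q) < \<phi> (t q)" for q
    proof -
      have "of_int (\<sigma> q) * ell q > 0" using slope that by (metis diff_gt_0_iff_gt)
      moreover have "ell q > 0" using slope that by auto
      ultimately show ?thesis by (simp add: zero_less_mult_iff)
    qed
    have sgn_neg: "\<sigma> q < 0" if "q \<in> E" "\<phi> (t q) < \<phi> (s q)" for q
    proof -
      have "of_int (\<sigma> q) * ell q < 0" using slope that by (metis diff_less_0_iff_less)
      moreover have "ell q > 0" using slope that by auto
      ultimately show ?thesis by (simp add: mult_less_0_iff)
    qed
    define Phi where "Phi q = (if t q \<in> B then \<sigma> q + 1 else 0) + (if s q \<in> B then 1 - \<sigma> q else 0)" for q
    define b where "b q = (if q \<in> T then 0 else 2) + (if q = q0 then 1 - \<bar>\<sigma> q0\<bar> else (0::int))" for q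
    have Phib: "Phi q \<le> b q" if q: "q \<in> E" for q
    proof -
      have sq: "s q \<in> V" and tq: "t q \<in> V" using st q by auto
      show ?thesis
      proof (cases "q = q0")
        case True
        show ?thesis
        proof (cases "\<sigma> q0 > 0")
          case pos: True
          have "\<phi> (s q0) < \<phi> (t q0)"
          proof (rule ccontr)
            assume "\<not> ?thesis"
            then have "\<phi> (t q0) < \<phi> (s q0) \<or> \<phi> (t q0) = \<phi> (s q0)" by auto
            then show False using sgn_neg[OF q0] pos slope q0 \<open>\<sigma> q0 \<noteq> 0\<close> by auto
          qed
          then have "s q0 \<in> B" "t q0 \<notin> B" "q0 \<in> T" using st q0 unfolding B_def c_def T_def A_def by auto
          then show ?thesis using True pos unfolding Phi_def b_def by auto
        next
          case neg: False
          then have neg': "\<sigma> q0 < 0" using \<open>\<sigma> q0 \<noteq> 0\<close> by simp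
          have "\<phi> (t q0) < \<phi> (s q0)"
          proof (rule ccontr)
            assume "\<not> ?thesis"
            then have "\<phi> (s q0) < \<phi> (t q0) \<or> \<phi> (t q0) = \<phi> (s q0)" by auto
            then show False using sgn_pos[OF q0] neg' slope q0 by auto
          qed
          then have "t q0 \<in> B" "s q0 \<notin> B" "q0 \<in> T" using st q0 unfolding B_def c_def T_def A_def by auto
          then show ?thesis using True neg' unfolding Phi_def b_def by auto
        qed
      next
        case False
        have "Phi q \<le> (if q \<in> T then 0 else 2)"
        proof (cases "s q \<in> B"; cases "t q \<in> B")
          assume "s q \<in> B" "t q \<notin> B"
          then have "\<phi> (s q) < \<phi> (t q)" using tq unfolding B_def by auto
          then show ?thesis using sgn_pos[OF q] \<open>s q \<in> B\<close> \<open>t q \<notin> B\<close> tq unfolding Phi_def T_def A_def by auto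
        next
          assume "s q \<notin> B" "t q \<in> B"
          then have "\<phi> (t q) < \<phi> (s q)" using sq unfolding B_def by auto
          then show ?thesis using sgn_neg[OF q] \<open>s q \<notin> B\<close> \<open>t q \<in> B\<close> sq unfolding Phi_def T_def A_def by auto
        qed (use sq tq in \<open>auto simp: Phi_def T_def A_def\<close>)
        then show ?thesis using False unfolding b_def by simp
      qed
    qed
    have "0 \<le> (\<Sum>u\<in>B. (\<Sum>q\<in>E. (if t q = u then \<sigma> q + 1 else 0) + (if s q = u then 1 - \<sigma> q else 0)) + (2 * w u - 2))"
      using cond BV by (auto intro!: sum_nonneg)
    also have "\<dots> = (\<Sum>q\<in>E. Phi q) + (\<Sum>u\<in>B. 2 * w u - 2)"
      unfolding Phi_def by (rule sumS[OF finB])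
    finally have s1: "0 \<le> (\<Sum>q\<in>E. Phi q) + (\<Sum>u\<in>B. 2 * w u - 2)" .
    have s2: "(\<Sum>q\<in>E. Phi q) \<le> (\<Sum>q\<in>E. b q)" using Phib by (rule sum_mono)
    have s3: "(\<Sum>q\<in>E. b q) = 2 * (int (card E) - int (card T)) + (1 - \<bar>\<sigma> q0\<bar>)"
    proof -
      have "(\<Sum>q\<in>E. b q) = (\<Sum>q\<in>E. (if q \<in> T then 0 else 2)) + (\<Sum>q\<in>E. (if q = q0 then 1 - \<bar>\<sigma> q0\<bar> else 0))"
        unfolding b_def by (simp add: sum.distrib)
      also have "(\<Sum>q\<in>E. (if q \<in> T then 0 else 2::int)) = (\<Sum>q\<in>E - T. 2)"
        using finE by (simp add: sum.If_cases Diff_eq Int_commute)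
      also have "\<dots> = 2 * (int (card E) - int (card T))"
        using finE finT by (simp add: card_Diff_subset T_def of_nat_diff card_mono)
      finally show ?thesis using q0 finE by simp
    qed
    have main: "0 \<le> 2 * (int (card E) - int (card T)) + (1 - \<bar>\<sigma> q0\<bar>) + (\<Sum>u\<in>B. 2 * w u - 2)"
      using s1 s2 s3 by linarith
    have VAB: "V = A \<union> B" "A \<inter> B = {}" using BV unfolding A_def by auto
    have cardV: "int (card V) = int (card A) + int (card B)"
      using finA finB VAB by (simp add: card_Un_disjoint)
    have sumV: "(\<Sum>u\<in>V. w u) = (\<Sum>u\<in>A. w u) + (\<Sum>u\<in>B. w u)"
      using finA finB VAB by (simp add: sum.union_disjoint)
    have WA: "(\<Sum>u\<in>A. w u) \<ge> 0" using wpos unfolding A_def by (auto intro: sum_nonneg)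
    have sB: "(\<Sum>u\<in>B. 2 * w u - 2) = 2 * (\<Sum>u\<in>B. w u) - 2 * int (card B)"
      by (simp add: sum_subtractf sum_distrib_left)
    have part1: "\<bar>\<sigma> q0\<bar> \<le> 2 * g - 1"
      using main of_nat_mono[OF cardAT, where 'a=int] cardV sumV WA sB unfolding g_def by (smt (verit))
    have part2: "\<bar>\<sigma> q0\<bar> \<le> 2 * g - 2"
      if K: "\<forall>u\<in>V. 0 \<le> (\<Sum>q\<in>E. (if t q = u then 1 else 0) + (if s q = u then 1 else 0)) + (2 * w u - 2)"
    proof -
      define Psi where "Psi q = (if t q \<in> A then 1 else 0) + (if s q \<in> A then 1 else (0::int))" for q
      have "0 \<le> (\<Sum>u\<in>A. (\<Sum>q\<in>E. (if t q = u then 1 else 0) + (if s q = u then 1 else 0)) + (2 * w u - 2))"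
        using K unfolding A_def by (auto intro!: sum_nonneg)
      also have "\<dots> = (\<Sum>q\<in>E. Psi q) + (\<Sum>u\<in>A. 2 * w u - 2)"
        unfolding Psi_def by (rule sumS[OF finA])
      finally have t1: "0 \<le> (\<Sum>q\<in>E. Psi q) + (\<Sum>u\<in>A. 2 * w u - 2)" .
      have t2: "(\<Sum>q\<in>E. Psi q) \<le> (\<Sum>q\<in>E. (if q \<in> T then 2 else 0) - (if q = q0 then 1 else 0))"
      proof (rule sum_mono)
        fix q assume q: "q \<in> E"
        have q0cross: "(s q0 \<in> A) \<noteq> (t q0 \<in> A)"
        proof -
          have "\<phi> (s q0) \<noteq> \<phi> (t q0)"
          proof
            assume "\<phi> (s q0) = \<phi> (t q0)"
            moreover have "\<phi> (t q0) - \<phi> (s q0) = of_int (\<sigma> q0) * ell q0" using slope q0 by simp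
            ultimately have "of_int (\<sigma> q0) * ell q0 = 0" by simp
            moreover have "ell q0 > 0" using slope q0 by simp
            ultimately show False using \<open>\<sigma> q0 \<noteq> 0\<close> by simp
          qed
          then show ?thesis using st q0 unfolding A_def B_def c_def by (auto simp: min_def)
        qed
        show "Psi q \<le> (if q \<in> T then 2 else 0) - (if q = q0 then 1 else 0)"
          using q q0cross q0 unfolding Psi_def T_def by auto
      qed
      have t3: "(\<Sum>q\<in>E. (if q \<in> T then 2 else 0) - (if q = q0 then 1 else (0::int))) = 2 * int (card T) - 1"
      proof -
        have "(\<Sum>q\<in>E. (if q \<in> T then 2 else (0::int))) = (\<Sum>q\<in>T. 2)"
          using finE by (simp add: sum.If_cases T_def Int_def)
        then show ?thesis using finE q0 by (simp add: sum_subtractf)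
      qed
      have "(\<Sum>u\<in>A. 2 * w u - 2) = 2 * (\<Sum>u\<in>A. w u) - 2 * int (card A)"
        by (simp add: sum_subtractf sum_distrib_left)
      then have "0 \<le> 2 * int (card T) - 1 + (2 * (\<Sum>u\<in>A. w u) - 2 * int (card A))"
        using t1 t2 t3 by linarith
      then have "int (card A) \<le> (\<Sum>u\<in>A. w u) + int (card T) - 1" by linarith
      then show ?thesis using main cardV sumV sB unfolding g_def by (smt (verit))
    qed
    show ?thesis using part1 part2 unfolding g_def by blast
  qed
qed



lemma rslope_eq:
  assumes d: "\<delta> > 0" and h: "\<forall>s\<in>{t..t+\<delta>}. f s = m * s + c"
  shows "rslope f t = m"
  unfolding rslope_def
proof (rule the_equality)
  have ft: "f t = m * t + c" using h d by auto
  show "\<exists>\<epsilon>>0. \<forall>s\<in>{t..t+\<epsilon>}. f s = f t + m * (s - t)"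
    using h d ft by (intro exI[of _ \<delta>]) (auto simp: algebra_simps)
next
  fix m' assume "\<exists>\<epsilon>>0. \<forall>s\<in>{t..t+\<epsilon>}. f s = f t + m' * (s - t)"
  then obtain \<epsilon> where e: "\<epsilon> > 0" "\<forall>s\<in>{t..t+\<epsilon>}. f s = f t + m' * (s - t)" by blast
  define s where "s = t + min \<epsilon> \<delta>"
  have sin: "s \<in> {t..t+\<delta>}" "s \<in> {t..t+\<epsilon>}" unfolding s_def using d e(1) by auto
  have s1: "f s = f t + m' * (s - t)" using e(2) sin by blast
  have s2: "f s = m * s + c" using h sin by blast
  have ft: "f t = m * t + c" using h d by auto
  have "m' * (s - t) = m * (s - t)" using s1 s2 ft by (simp add: algebra_simps)
  moreover have "s - t \<noteq> 0" unfolding s_def using d e(1) by simp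
  ultimately show "m' = m" by simp
qed

lemma lslope_eq:
  assumes d: "\<delta> > 0" and h: "\<forall>s\<in>{t-\<delta>..t}. f s = m * s + c"
  shows "lslope f t = m"
  unfolding lslope_def
proof (rule the_equality)
  have ft: "f t = m * t + c" using h d by auto
  show "\<exists>\<epsilon>>0. \<forall>s\<in>{t-\<epsilon>..t}. f s = f t + m * (s - t)"
    using h d ft by (intro exI[of _ \<delta>]) (auto simp: algebra_simps)
next
  fix m' assume "\<exists>\<epsilon>>0. \<forall>s\<in>{t-\<epsilon>..t}. f s = f t + m' * (s - t)"
  then obtain \<epsilon> where e: "\<epsilon> > 0" "\<forall>s\<in>{t-\<epsilon>..t}. f s = f t + m' * (s - t)" by blast
  define s where "s = t - min \<epsilon> \<delta>"
  have sin: "s \<in> {t-\<delta>..t}" "s \<in> {t-\<epsilon>..t}" unfolding s_def using d e(1) by auto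
  have s1: "f s = f t + m' * (s - t)" using e(2) sin by blast
  have s2: "f s = m * s + c" using h sin by blast
  have ft: "f t = m * t + c" using h d by auto
  have "m' * (s - t) = m * (s - t)" using s1 s2 ft by (simp add: algebra_simps)
  moreover have "s - t \<noteq> 0" unfolding s_def using d e(1) by simp
  ultimately show "m' = m" by simp
qed

lemma find_r:
  fixes a :: "nat \<Rightarrow> real"
  shows "\<forall>i<n. a i < a (Suc i) \<Longrightarrow> a 0 \<le> x \<Longrightarrow> x < a n \<Longrightarrow> \<exists>i<n. a i \<le> x \<and> x < a (Suc i)"
proof (induction n)
  case 0 then show ?case by simp
next
  case (Suc n)
  show ?case
  proof (cases "x < a n")
    case True then show ?thesis using Suc by (metis less_SucI)
  next
    case False then show ?thesis using Suc by (intro exI[of _ n]) auto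
  qed
qed

lemma find_l:
  fixes a :: "nat \<Rightarrow> real"
  shows "\<forall>i<n. a i < a (Suc i) \<Longrightarrow> a 0 < x \<Longrightarrow> x \<le> a n \<Longrightarrow> \<exists>i<n. a i < x \<and> x \<le> a (Suc i)"
proof (induction n)
  case 0 then show ?case by simp
next
  case (Suc n)
  show ?case
  proof (cases "x \<le> a n")
    case True then show ?thesis using Suc by (metis less_SucI)
  next
    case False then show ?thesis using Suc by (intro exI[of _ n]) auto
  qed
qed

lemma mono_seq:
  fixes a :: "nat \<Rightarrow> real"
  assumes "\<forall>i<n. a i < a (Suc i)"
  shows "i < j \<Longrightarrow> j \<le> n \<Longrightarrow> a i < a j"
proof (induction j)
  case 0 then show ?case by simp
next
  case (Suc j)
  show ?case
  proof (cases "i = j")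
    case True then show ?thesis using assms Suc by auto
  next
    case False then have "a i < a j" using Suc by auto
    moreover have "a j < a (Suc j)" using assms Suc by auto
    ultimately show ?thesis by simp
  qed
qed

lemma mono_inj:
  fixes a :: "nat \<Rightarrow> real"
  assumes "\<forall>i<n. a i < a (Suc i)" "i \<le> n" "j \<le> n" "a i = a j"
  shows "i = j"
proof (rule ccontr)
  assume "i \<noteq> j"
  then have "i < j \<or> j < i" by auto
  then show False using mono_seq[OF assms(1)] assms by (metis less_irrefl)
qed



theorem lemma4p8:
  fixes G :: "('v, 'e) wmgraph" and F :: "('v, 'e) point \<Rightarrow> real"
  assumes "metric_graph G"
    and "trop_mero G F"
    and "\<forall>x\<in>points G. ord G F x + of_int (canon G x) \<ge> 0"
  shows "(\<forall>x\<in>points G. \<forall>d\<in>tdirs G x. \<bar>dslope G F x d\<bar> \<le> of_int (2 * genus G - 1))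
       \<and> ((\<forall>x\<in>points G. canon G x \<ge> 0) \<longrightarrow>
          (\<forall>x\<in>points G. \<forall>d\<in>tdirs G x. \<bar>dslope G F x d\<bar> \<le> of_int (2 * genus G - 2)))"
proof -
  from assms(1) have finV: "finite (verts G)" and Vne: "verts G \<noteq> {}" and finE: "finite (edges G)"
    and eV: "\<forall>e\<in>edges G. src G e \<in> verts G \<and> tgt G e \<in> verts G \<and> len G e > 0"
    and connG: "\<forall>a\<in>verts G. \<forall>b\<in>verts G. (adj G)\<^sup>*\<^sup>* a b"
    unfolding metric_graph_def by auto
  have "\<forall>e\<in>edges G. \<exists>p. snd p 0 = 0 \<and> snd p (fst p) = len G e \<and> (\<forall>i<fst p. snd p i < snd p (Suc i)) \<and>
      (\<forall>i<fst p. \<exists>(m::int) (c::real). \<forall>t\<in>{snd p i..snd p (Suc i)}. on_edge G F e t = of_int m * t + c)"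
  proof
    fix e assume e: "e \<in> edges G"
    then have "pw_affine_int (len G e) (on_edge G F e)" using assms(2) unfolding trop_mero_def by blast
    then obtain n aa where h: "aa 0 = 0" "aa n = len G e" "\<forall>i<n. aa i < aa (Suc i)"
      "\<forall>i<n. \<exists>(m::int) (c::real). \<forall>t\<in>{aa i..aa (Suc i)}. on_edge G F e t = of_int m * t + c"
      unfolding pw_affine_int_def by blast
    show "\<exists>p. snd p 0 = 0 \<and> snd p (fst p) = len G e \<and> (\<forall>i<fst p. snd p i < snd p (Suc i)) \<and>
      (\<forall>i<fst p. \<exists>(m::int) (c::real). \<forall>t\<in>{snd p i..snd p (Suc i)}. on_edge G F e t = of_int m * t + c)"
      using h by (intro exI[of _ "(n, aa)"]) simp
  qed
  from bchoice[OF this] obtain f where f: "\<forall>e\<in>edges G. snd (f e) 0 = 0 \<and> snd (f e) (fst (f e)) = len G e \<and>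
      (\<forall>i<fst (f e). snd (f e) i < snd (f e) (Suc i)) \<and>
      (\<forall>i<fst (f e). \<exists>(m::int) (c::real). \<forall>t\<in>{snd (f e) i..snd (f e) (Suc i)}. on_edge G F e t = of_int m * t + c)"
    by blast
  define N where "N e = fst (f e)" for e
  define a where "a e = snd (f e)" for e
  have a0: "a e 0 = 0" and aN: "a e (N e) = len G e" and amono: "\<forall>i<N e. a e i < a e (Suc i)"
    if "e \<in> edges G" for e using f that unfolding N_def a_def by auto
  have "\<forall>p. \<exists>mc::int\<times>real. fst p \<in> edges G \<and> snd p < N (fst p) \<longrightarrow>
     (\<forall>t\<in>{a (fst p) (snd p)..a (fst p) (Suc (snd p))}. on_edge G F (fst p) t = of_int (fst mc) * t + snd mc)"
  proof
    fix p :: "'e \<times> nat"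
    show "\<exists>mc::int\<times>real. fst p \<in> edges G \<and> snd p < N (fst p) \<longrightarrow>
     (\<forall>t\<in>{a (fst p) (snd p)..a (fst p) (Suc (snd p))}. on_edge G F (fst p) t = of_int (fst mc) * t + snd mc)"
    proof (cases "fst p \<in> edges G \<and> snd p < N (fst p)")
      case True
      then obtain m c where "\<forall>t\<in>{a (fst p) (snd p)..a (fst p) (Suc (snd p))}. on_edge G F (fst p) t = of_int (m::int) * t + c"
        using f unfolding N_def a_def by blast
      then show ?thesis by (intro exI[of _ "(m, c)"]) simp
    next
      case False then show ?thesis by blast
    qed
  qed
  from choice[OF this] obtain g where g: "\<forall>p. fst p \<in> edges G \<and> snd p < N (fst p) \<longrightarrow>
     (\<forall>t\<in>{a (fst p) (snd p)..a (fst p) (Suc (snd p))}. on_edge G F (fst p) t = of_int (fst (g p)) * t + snd (g p))"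
    by blast
  define M where "M e i = fst (g (e, i))" for e i
  define C where "C e i = snd (g (e, i))" for e i
  have piece: "on_edge G F e t = of_int (M e i) * t + C e i"
    if "e \<in> edges G" "i < N e" "a e i \<le> t" "t \<le> a e (Suc i)" for e i t
    using g[rule_format, of "(e, i)"] that unfolding M_def C_def by auto
  have mono: "a e i < a e j" if "e \<in> edges G" "i < j" "j \<le> N e" for e i j
    using mono_seq[OF amono[OF that(1)]] that by auto
  have ainj: "i = j" if "e \<in> edges G" "i \<le> N e" "j \<le> N e" "a e i = a e j" for e i j
    using mono_inj[OF amono[OF that(1)]] that by auto
  have Npos: "N e > 0" if "e \<in> edges G" for e
  proof (rule ccontr)
    assume "\<not> N e > 0" then have "N e = 0" by simp
    then show False using a0[OF that] aN[OF that] eV that by auto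
  qed
  have rs: "rslope (on_edge G F e) x = of_int (M e i)"
    if "e \<in> edges G" "i < N e" "a e i \<le> x" "x < a e (Suc i)" for e i x
  proof (rule rslope_eq[where \<delta> = "a e (Suc i) - x" and c = "C e i"])
    show "a e (Suc i) - x > 0" using that by simp
    show "\<forall>s\<in>{x..x + (a e (Suc i) - x)}. on_edge G F e s = of_int (M e i) * s + C e i"
      using piece that by auto
  qed
  have ls: "lslope (on_edge G F e) x = of_int (M e i)"
    if "e \<in> edges G" "i < N e" "a e i < x" "x \<le> a e (Suc i)" for e i x
  proof (rule lslope_eq[where \<delta> = "x - a e i" and c = "C e i"])
    show "x - a e i > 0" using that by simp
    show "\<forall>s\<in>{x - (x - a e i)..x}. on_edge G F e s = of_int (M e i) * s + C e i"
      using piece that by auto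
  qed
  define pt where "pt e x = (if x = 0 then Vert (src G e) else if x = len G e then Vert (tgt G e) else EPt e x)" for e x
  have Fpt: "F (pt e x) = on_edge G F e x" for e x by (simp add: pt_def on_edge_def)
  have a0iff: "a e k = 0 \<longleftrightarrow> k = 0" if "e \<in> edges G" "k \<le> N e" for e k
    using ainj[OF that(1) that(2), of 0] a0[OF that(1)] by auto
  have aNiff: "a e k = len G e \<longleftrightarrow> k = N e" if "e \<in> edges G" "k \<le> N e" for e k
    using ainj[OF that(1) that(2), of "N e"] aN[OF that(1)] by auto
  have pta: "pt e (a e k) = (if k = 0 then Vert (src G e) else if k = N e then Vert (tgt G e) else EPt e (a e k))"
    if "e \<in> edges G" "k \<le> N e" for e k
    using a0iff[OF that] aNiff[OF that] a0[OF that(1)] Npos[OF that(1)] unfolding pt_def by auto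
  have arange: "0 < a e k \<and> a e k < len G e" if "e \<in> edges G" "0 < k" "k < N e" for e k
    using mono[OF that(1) that(2)] mono[OF that(1) that(3)] a0[OF that(1)] aN[OF that(1)] that by auto
  define E' where "E' = (SIGMA e:edges G. {..<N e})"
  define V' where "V' = Vert ` verts G \<union> (\<lambda>p. EPt (fst p) (a (fst p) (snd p))) ` (SIGMA e:edges G. {0<..<N e})"
  define s' where "s' q = pt (fst q) (a (fst q) (snd q))" for q
  define t' where "t' q = pt (fst q) (a (fst q) (Suc (snd q)))" for q
  define w' where "w' u = int (weight G u)" for u
  define \<sigma> where "\<sigma> q = M (fst q) (snd q)" for q
  define ell where "ell q = a (fst q) (Suc (snd q)) - a (fst q) (snd q)" for q
  have finE': "finite E'" unfolding E'_def using finE by auto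
  have finV': "finite V'" unfolding V'_def using finE finV by auto
  have ptV: "pt e (a e k) \<in> V'" if hk: "e \<in> edges G" "k \<le> N e" for e k
  proof -
    consider "k = 0" | "k = N e" | "0 < k" "k < N e" using hk by linarith
    then show ?thesis
    proof cases
      case 1 then show ?thesis using pta[OF hk] eV hk unfolding V'_def by auto
    next
      case 2 then show ?thesis using pta[OF hk] eV hk Npos[OF hk(1)] unfolding V'_def by auto
    next
      case 3 then have "(e, k) \<in> (SIGMA e:edges G. {0<..<N e})" using hk by auto
      then show ?thesis using pta[OF hk] 3 unfolding V'_def by force
    qed
  qed
  have st': "\<forall>q\<in>E'. s' q \<in> V' \<and> t' q \<in> V'"
    unfolding E'_def s'_def t'_def using ptV by auto
  have slope': "\<forall>q\<in>E'. ell q > 0 \<and> F (t' q) - F (s' q) = of_int (\<sigma> q) * ell q"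
  proof
    fix q assume q: "q \<in> E'"
    obtain e i where qe: "q = (e, i)" "e \<in> edges G" "i < N e" using q unfolding E'_def by auto
    have "F (t' q) = of_int (M e i) * a e (Suc i) + C e i"
      unfolding qe t'_def Fpt using piece[OF qe(2,3)] mono[OF qe(2), of i "Suc i"] qe by auto
    moreover have "F (s' q) = of_int (M e i) * a e i + C e i"
      unfolding qe s'_def Fpt using piece[OF qe(2,3)] mono[OF qe(2), of i "Suc i"] qe by auto
    ultimately show "ell q > 0 \<and> F (t' q) - F (s' q) = of_int (\<sigma> q) * ell q"
      unfolding ell_def \<sigma>_def qe using mono[OF qe(2), of i "Suc i"] qe by (auto simp: algebra_simps)
  qed
  define R where "R = (\<lambda>x y. \<exists>q\<in>E'. (s' q = x \<and> t' q = y) \<or> (s' q = y \<and> t' q = x))"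
  have symR: "symp R" unfolding R_def symp_def by blast
  have Rsym: "R\<^sup>*\<^sup>* y x" if "R\<^sup>*\<^sup>* x y" for x y
    using sympD[OF symp_rtranclp[OF symR] that] .
  have chain: "j \<le> N e \<Longrightarrow> R\<^sup>*\<^sup>* (Vert (src G e)) (pt e (a e j))" if e: "e \<in> edges G" for e j
  proof (induction j)
    case 0 then show ?case using pta[OF e, of 0] by simp
  next
    case (Suc j)
    have "R (pt e (a e j)) (pt e (a e (Suc j)))"
      unfolding R_def E'_def s'_def t'_def using Suc.prems e by (intro bexI[of _ "(e, j)"]) auto
    then show ?case using Suc by (meson Suc_leD rtranclp.rtrancl_into_rtrancl)
  qed
  have adjR: "R\<^sup>*\<^sup>* (Vert x) (Vert y)" if hxy: "adj G x y" for x y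
  proof -
    obtain e where e: "e \<in> edges G" "(src G e = x \<and> tgt G e = y) \<or> (src G e = y \<and> tgt G e = x)"
      using hxy unfolding adj_def by blast
    have "R\<^sup>*\<^sup>* (Vert (src G e)) (Vert (tgt G e))"
      using chain[OF e(1), of "N e"] pta[OF e(1), of "N e"] Npos[OF e(1)] by simp
    then show ?thesis using e(2) Rsym by auto
  qed
  have liftR: "R\<^sup>*\<^sup>* (Vert x) (Vert y)" if "(adj G)\<^sup>*\<^sup>* x y" for x y
    using that
  proof (induction rule: rtranclp_induct)
    case base then show ?case by simp
  next
    case (step y z) then show ?case using adjR by (meson rtranclp_trans)
  qed
  obtain v0 where v0: "v0 \<in> verts G" using Vne by auto
  have fromv0: "R\<^sup>*\<^sup>* (Vert v0) u" if hu: "u \<in> V'" for u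
  proof -
    consider v where "v \<in> verts G" "u = Vert v" | e k where "e \<in> edges G" "0 < k" "k < N e" "u = EPt e (a e k)"
      using hu unfolding V'_def by auto
    then show ?thesis
    proof cases
      case 1 then show ?thesis using liftR connG v0 by auto
    next
      case 2
      have "R\<^sup>*\<^sup>* (Vert (src G e)) u" using chain[OF 2(1), of k] pta[OF 2(1), of k] 2 by simp
      moreover have "R\<^sup>*\<^sup>* (Vert v0) (Vert (src G e))" using liftR connG v0 eV 2(1) by auto
      ultimately show ?thesis by (meson rtranclp_trans)
    qed
  qed
  have conn': "\<forall>x\<in>V'. \<forall>y\<in>V'. (\<lambda>x y. \<exists>q\<in>E'. (s' q = x \<and> t' q = y) \<or> (s' q = y \<and> t' q = x))\<^sup>*\<^sup>* x y"
    using fromv0 Rsym unfolding R_def[symmetric] by (meson rtranclp_trans)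
  have sumE': "(\<Sum>q\<in>E'. h q) = (\<Sum>e\<in>edges G. \<Sum>i<N e. h (e, i))" for h :: "'e \<times> nat \<Rightarrow> int"
    unfolding E'_def using finE by (simp add: sum.Sigma)
  have sV: "s' (e, i) = Vert v \<longleftrightarrow> i = 0 \<and> src G e = v" if "e \<in> edges G" "i < N e" for e i v
    using pta[OF that(1), of i] that unfolding s'_def by auto
  have tV: "t' (e, i) = Vert v \<longleftrightarrow> i = N e - 1 \<and> tgt G e = v" if "e \<in> edges G" "i < N e" for e i v
    using pta[OF that(1), of "Suc i"] that unfolding t'_def by auto
  have sP: "s' (e, i) = EPt e0 (a e0 j) \<longleftrightarrow> e = e0 \<and> i = j"
    if "e \<in> edges G" "i < N e" "0 < j" "j < N e0" for e i e0 j
    using pta[OF that(1), of i] that ainj[OF that(1), of i j] unfolding s'_def by auto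
  have tP: "t' (e, i) = EPt e0 (a e0 j) \<longleftrightarrow> e = e0 \<and> i = j - 1"
    if "e \<in> edges G" "i < N e" "0 < j" "j < N e0" for e i e0 j
    using pta[OF that(1), of "Suc i"] that ainj[OF that(1), of "Suc i" j] unfolding t'_def by auto
  have vsum: "(\<Sum>q\<in>E'. (if t' q = Vert v then gg q else 0) + (if s' q = Vert v then hh q else 0))
     = (\<Sum>e\<in>edges G. (if tgt G e = v then gg (e, N e - 1) else 0) + (if src G e = v then hh (e, 0) else 0))"
    for v and gg hh :: "'e \<times> nat \<Rightarrow> int"
    unfolding sumE'
  proof (rule sum.cong[OF refl])
    fix e assume e: "e \<in> edges G"
    have "(\<Sum>i<N e. (if t' (e, i) = Vert v then gg (e, i) else 0) + (if s' (e, i) = Vert v then hh (e, i) else 0))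
      = (\<Sum>i<N e. (if i = N e - 1 then (if tgt G e = v then gg (e, N e - 1) else 0) else 0)
                  + (if i = 0 then (if src G e = v then hh (e, 0) else 0) else 0))"
    proof (rule sum.cong[OF refl])
      fix i assume i: "i \<in> {..<N e}"
      have t1: "(if t' (e, i) = Vert v then gg (e, i) else 0) = (if i = N e - 1 then (if tgt G e = v then gg (e, N e - 1) else 0) else 0)"
        using tV[OF e, of i v] i by (cases "i = N e - 1") auto
      have s1: "(if s' (e, i) = Vert v then hh (e, i) else 0) = (if i = 0 then (if src G e = v then hh (e, 0) else 0) else 0)"
        using sV[OF e, of i v] i by (cases "i = 0") auto
      show "(if t' (e, i) = Vert v then gg (e, i) else 0) + (if s' (e, i) = Vert v then hh (e, i) else 0)
        = (if i = N e - 1 then (if tgt G e = v then gg (e, N e - 1) else 0) else 0)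
                  + (if i = 0 then (if src G e = v then hh (e, 0) else 0) else 0)"
        using t1 s1 by simp
    qed
    also have "\<dots> = (if tgt G e = v then gg (e, N e - 1) else 0) + (if src G e = v then hh (e, 0) else 0)"
      using Npos[OF e] by (simp add: sum.distrib)
    finally show "(\<Sum>i<N e. (if t' (e, i) = Vert v then gg (e, i) else 0) + (if s' (e, i) = Vert v then hh (e, i) else 0))
      = (if tgt G e = v then gg (e, N e - 1) else 0) + (if src G e = v then hh (e, 0) else 0)" .
  qed
  have psum: "(\<Sum>q\<in>E'. (if t' q = EPt e0 (a e0 j) then gg q else 0) + (if s' q = EPt e0 (a e0 j) then hh q else 0))
     = gg (e0, j - 1) + hh (e0, j)"
    if e0: "e0 \<in> edges G" "0 < j" "j < N e0" for e0 j and gg hh :: "'e \<times> nat \<Rightarrow> int"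
  proof -
    have "(\<Sum>q\<in>E'. (if t' q = EPt e0 (a e0 j) then gg q else 0) + (if s' q = EPt e0 (a e0 j) then hh q else 0))
      = (\<Sum>q\<in>E'. (if q = (e0, j - 1) then gg q else 0) + (if q = (e0, j) then hh q else 0))"
    proof (rule sum.cong[OF refl])
      fix q assume "q \<in> E'"
      then obtain e i where q: "q = (e, i)" "e \<in> edges G" "i < N e" unfolding E'_def by auto
      show "(if t' q = EPt e0 (a e0 j) then gg q else 0) + (if s' q = EPt e0 (a e0 j) then hh q else 0)
        = (if q = (e0, j - 1) then gg q else 0) + (if q = (e0, j) then hh q else 0)"
        using tP[OF q(2,3) e0(2,3)] sP[OF q(2,3) e0(2,3)] q(1) by auto
    qed
    also have "\<dots> = gg (e0, j - 1) + hh (e0, j)"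
    proof -
      have m: "(e0, j - 1) \<in> E'" "(e0, j) \<in> E'" using e0 unfolding E'_def by auto
      show ?thesis unfolding sum.distrib using sum.delta[OF finE', of "(e0, j - 1)" gg] sum.delta[OF finE', of "(e0, j)" hh] m
        by simp
    qed
    finally show ?thesis .
  qed
  have tdV: "(\<Sum>d\<in>tdirs G (Vert v). kk d) = (\<Sum>e\<in>edges G. (if src G e = v then kk (e, True) else 0) + (if tgt G e = v then kk (e, False) else 0))"
    for v and kk :: "'e \<times> bool \<Rightarrow> real"
  proof -
    have td: "tdirs G (Vert v) = (\<lambda>e. (e, True)) ` {e\<in>edges G. src G e = v} \<union> (\<lambda>e. (e, False)) ` {e\<in>edges G. tgt G e = v}"
      unfolding tdirs_def by auto
    have "(\<Sum>d\<in>tdirs G (Vert v). kk d) = (\<Sum>d\<in>(\<lambda>e. (e, True)) ` {e\<in>edges G. src G e = v}. kk d) + (\<Sum>d\<in>(\<lambda>e. (e, False)) ` {e\<in>edges G. tgt G e = v}. kk d)"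
      unfolding td by (rule sum.union_disjoint) (use finE in auto)
    also have "\<dots> = (\<Sum>e\<in>{e\<in>edges G. src G e = v}. kk (e, True)) + (\<Sum>e\<in>{e\<in>edges G. tgt G e = v}. kk (e, False))"
      by (simp add: sum.reindex inj_on_def)
    also have "\<dots> = (\<Sum>e\<in>edges G. (if src G e = v then kk (e, True) else 0) + (if tgt G e = v then kk (e, False) else 0))"
      using finE by (simp add: sum.inter_filter sum.distrib)
    finally show ?thesis .
  qed
  have tdP: "tdirs G (EPt e x) = {(e, True), (e, False)}" for e x unfolding tdirs_def by simp
  have dsV1: "dslope G F (Vert v) (e, True) = of_int (M e 0)" if "e \<in> edges G" for e v
    unfolding dslope_def param_def using rs[OF that Npos[OF that], of 0] a0[OF that] mono[OF that, of 0 1] Npos[OF that] by simp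
  have dsV2: "dslope G F (Vert v) (e, False) = - of_int (M e (N e - 1))" if "e \<in> edges G" for e v
    unfolding dslope_def param_def using ls[OF that, of "N e - 1" "len G e"] aN[OF that] mono[OF that, of "N e - 1" "N e"] Npos[OF that] by simp
  have dsP1: "dslope G F (EPt e (a e j)) (e, True) = of_int (M e j)" if "e \<in> edges G" "j < N e" for e j
    unfolding dslope_def param_def using rs[OF that, of "a e j"] mono[OF that(1), of j "Suc j"] that by simp
  have dsP2: "dslope G F (EPt e (a e j)) (e, False) = - of_int (M e (j - 1))" if "e \<in> edges G" "0 < j" "j < N e" for e j
    unfolding dslope_def param_def using ls[OF that(1), of "j - 1" "a e j"] mono[OF that(1), of "j - 1" j] that by simp
  have V'cases: "(\<exists>v\<in>verts G. u = Vert v) \<or> (\<exists>e j. e \<in> edges G \<and> 0 < j \<and> j < N e \<and> u = EPt e (a e j))"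
    if "u \<in> V'" for u using that unfolding V'_def by auto
  have V'pts: "V' \<subseteq> points G"
    unfolding V'_def points_def using arange by force
  have cond': "\<forall>u\<in>V'. 0 \<le> (\<Sum>q\<in>E'. (if t' q = u then \<sigma> q + 1 else 0) + (if s' q = u then 1 - \<sigma> q else 0)) + (2 * w' u - 2)"
  proof
    fix u assume u: "u \<in> V'"
    have hyp: "0 \<le> ord G F u + of_int (canon G u)" using assms(3) V'pts u by auto
    have oc: "ord G F u + of_int (canon G u) = (\<Sum>d\<in>tdirs G u. 1 - dslope G F u d) + (2 * real (weight G u) - 2)"
      unfolding ord_def canon_def valency_def by (simp add: sum_subtractf)
    have "real_of_int ((\<Sum>q\<in>E'. (if t' q = u then \<sigma> q + 1 else 0) + (if s' q = u then 1 - \<sigma> q else 0)) + (2 * w' u - 2))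
       = ord G F u + of_int (canon G u)"
    proof (cases "\<exists>v\<in>verts G. u = Vert v")
      case True
      then obtain v where v: "v \<in> verts G" "u = Vert v" by auto
      have "(\<Sum>d\<in>tdirs G u. 1 - dslope G F u d) = (\<Sum>e\<in>edges G. (if src G e = v then 1 - dslope G F u (e, True) else 0) + (if tgt G e = v then 1 - dslope G F u (e, False) else 0))"
        unfolding v(2) by (rule tdV)
      also have "\<dots> = (\<Sum>e\<in>edges G. real_of_int ((if tgt G e = v then \<sigma> (e, N e - 1) + 1 else 0) + (if src G e = v then 1 - \<sigma> (e, 0) else 0)))"
        by (rule sum.cong[OF refl]) (auto simp: v(2) dsV1 dsV2 \<sigma>_def)
      finally have "(\<Sum>d\<in>tdirs G u. 1 - dslope G F u d) = real_of_int (\<Sum>q\<in>E'. (if t' q = u then \<sigma> q + 1 else 0) + (if s' q = u then 1 - \<sigma> q else 0))"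
        unfolding v(2) vsum by simp
      then show ?thesis unfolding oc by (simp add: w'_def)
    next
      case False
      then obtain e j where ej: "e \<in> edges G" "0 < j" "j < N e" "u = EPt e (a e j)" using V'cases[OF u] by blast
      have "(\<Sum>q\<in>E'. (if t' q = u then \<sigma> q + 1 else 0) + (if s' q = u then 1 - \<sigma> q else 0))
          = (\<sigma> (e, j - 1) + 1) + (1 - \<sigma> (e, j))"
        unfolding ej(4) by (rule psum[OF ej(1-3)])
      moreover have "(\<Sum>d\<in>tdirs G u. 1 - dslope G F u d) = (1 - of_int (M e j)) + (1 + of_int (M e (j - 1)))"
        unfolding ej(4) tdP using dsP1[OF ej(1,3)] dsP2[OF ej(1-3)] by simp
      ultimately show ?thesis unfolding oc using ej(4) by (simp add: w'_def weight_def \<sigma>_def)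
    qed
    then show "0 \<le> (\<Sum>q\<in>E'. (if t' q = u then \<sigma> q + 1 else 0) + (if s' q = u then 1 - \<sigma> q else 0)) + (2 * w' u - 2)"
      using hyp by linarith
  qed
  have K': "\<forall>u\<in>V'. 0 \<le> (\<Sum>q\<in>E'. (if t' q = u then 1 else 0) + (if s' q = u then 1 else 0)) + (2 * w' u - 2)"
    if Kh: "\<forall>x\<in>points G. canon G x \<ge> 0"
  proof
    fix u assume u: "u \<in> V'"
    have hyp: "0 \<le> canon G u" using Kh V'pts u by auto
    have oc: "real_of_int (canon G u) = (\<Sum>d\<in>tdirs G u. 1) + (2 * real (weight G u) - 2)"
      unfolding canon_def valency_def by simp
    have "real_of_int ((\<Sum>q\<in>E'. (if t' q = u then 1 else 0) + (if s' q = u then 1 else 0)) + (2 * w' u - 2))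
       = of_int (canon G u)"
    proof (cases "\<exists>v\<in>verts G. u = Vert v")
      case True
      then obtain v where v: "v \<in> verts G" "u = Vert v" by auto
      have "(\<Sum>d\<in>tdirs G u. 1::real) = (\<Sum>e\<in>edges G. (if src G e = v then 1 else 0) + (if tgt G e = v then 1 else 0))"
        unfolding v(2) by (rule tdV)
      also have "\<dots> = (\<Sum>e\<in>edges G. real_of_int ((if tgt G e = v then 1 else 0) + (if src G e = v then 1 else 0)))"
        by (rule sum.cong[OF refl]) auto
      finally have "(\<Sum>d\<in>tdirs G u. 1::real) = real_of_int (\<Sum>q\<in>E'. (if t' q = u then 1 else 0) + (if s' q = u then 1 else 0))"
        unfolding v(2) vsum[of v "\<lambda>q. 1" "\<lambda>q. 1"] by simp
      then show ?thesis unfolding oc by (simp add: w'_def)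
    next
      case False
      then obtain e j where ej: "e \<in> edges G" "0 < j" "j < N e" "u = EPt e (a e j)" using V'cases[OF u] by blast
      have "(\<Sum>q\<in>E'. (if t' q = u then 1 else 0) + (if s' q = u then 1 else 0)) = (1::int) + 1"
        unfolding ej(4) using psum[OF ej(1-3), of "\<lambda>q. 1" "\<lambda>q. 1"] by simp
      moreover have "(\<Sum>d\<in>tdirs G u. 1::real) = 2" unfolding ej(4) tdP by simp
      ultimately show ?thesis unfolding oc using ej(4) by (simp add: w'_def weight_def)
    qed
    then show "0 \<le> (\<Sum>q\<in>E'. (if t' q = u then 1 else 0) + (if s' q = u then 1 else 0)) + (2 * w' u - 2)"
      using hyp by linarith
  qed
  have wpos': "\<forall>u\<in>V'. w' u \<ge> 0" by (simp add: w'_def)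
  have CB: "\<bar>\<sigma> q0\<bar> \<le> 2 * (int (card E') - int (card V') + 1 + (\<Sum>u\<in>V'. w' u)) - 1 \<and>
     ((\<forall>u\<in>V'. 0 \<le> (\<Sum>q\<in>E'. (if t' q = u then 1 else 0) + (if s' q = u then 1 else 0)) + (2 * w' u - 2))
       \<longrightarrow> \<bar>\<sigma> q0\<bar> \<le> 2 * (int (card E') - int (card V') + 1 + (\<Sum>u\<in>V'. w' u)) - 2)"
    if "q0 \<in> E'" for q0
    by (rule comb[OF finV' finE' st' slope' conn' wpos' cond' that])
  define P where "P = (SIGMA e:edges G. {0<..<N e})"
  define h where "h = (\<lambda>p. EPt (fst p) (a (fst p) (snd p)) :: ('v, 'e) point)"
  have finP: "finite P" unfolding P_def using finE by auto
  have injh: "inj_on h P"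
    unfolding inj_on_def P_def h_def using ainj by fastforce
  have V'eq: "V' = Vert ` verts G \<union> h ` P" unfolding V'_def P_def h_def by simp
  have disj: "Vert ` verts G \<inter> h ` P = {}" unfolding h_def by auto
  have cardP: "card P = (\<Sum>e\<in>edges G. N e - 1)" unfolding P_def using finE by simp
  have cardE': "card E' = (\<Sum>e\<in>edges G. N e)" unfolding E'_def using finE by simp
  have cardV': "card V' = card (verts G) + card P"
    unfolding V'eq using finV finP disj card_image[OF injh] by (simp add: card_Un_disjoint card_image inj_on_def)
  have sumw: "(\<Sum>u\<in>V'. w' u) = int (\<Sum>v\<in>verts G. wt G v)"
  proof -
    have "(\<Sum>u\<in>V'. w' u) = (\<Sum>u\<in>Vert ` verts G. w' u) + (\<Sum>u\<in>h ` P. w' u)"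
      unfolding V'eq using finV finP disj by (simp add: sum.union_disjoint)
    also have "(\<Sum>u\<in>h ` P. w' u) = 0" unfolding h_def by (rule sum.neutral) (auto simp: w'_def weight_def)
    also have "(\<Sum>u\<in>Vert ` verts G. w' u) = (\<Sum>v\<in>verts G. int (wt G v))"
      by (simp add: sum.reindex inj_on_def w'_def weight_def)
    finally show ?thesis by simp
  qed
  have gen: "int (card E') - int (card V') + 1 + (\<Sum>u\<in>V'. w' u) = genus G"
  proof -
    have "int (card P) = (\<Sum>e\<in>edges G. int (N e) - 1)"
      unfolding cardP of_nat_sum
    proof (rule sum.cong[OF refl])
      fix e assume "e \<in> edges G"
      then have "N e \<ge> 1" using Npos by (simp add: Suc_leI)
      then show "int (N e - 1) = int (N e) - 1" by (simp add: of_nat_diff)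
    qed
    also have "\<dots> = int (card E') - int (card (edges G))"
      unfolding cardE' by (simp add: sum_subtractf)
    finally show ?thesis unfolding genus_def cardV' sumw by simp
  qed
  have bound: "\<exists>q\<in>E'. \<bar>dslope G F x d\<bar> = of_int \<bar>\<sigma> q\<bar>" if x: "x \<in> points G" and d: "d \<in> tdirs G x" for x d
  proof (cases x)
    case (Vert v)
    then obtain e b where eb: "d = (e, b)" "e \<in> edges G" using d unfolding tdirs_def by auto
    show ?thesis
    proof (cases b)
      case True
      have "(e, 0) \<in> E'" using Npos[OF eb(2)] eb unfolding E'_def by auto
      then show ?thesis using dsV1[OF eb(2)] True unfolding Vert eb by (intro bexI[of _ "(e, 0)"]) (simp_all add: \<sigma>_def)
    next
      case False
      have "(e, N e - 1) \<in> E'" using Npos[OF eb(2)] eb unfolding E'_def by auto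
      then show ?thesis using dsV2[OF eb(2)] False unfolding Vert eb by (intro bexI[of _ "(e, N e - 1)"]) (simp_all add: \<sigma>_def)
    qed
  next
    case (EPt e t)
    have et: "e \<in> edges G" "0 < t" "t < len G e" using x unfolding EPt points_def by auto
    obtain b where b: "d = (e, b)" using d unfolding EPt tdirs_def by auto
    show ?thesis
    proof (cases b)
      case True
      obtain i where i: "i < N e" "a e i \<le> t" "t < a e (Suc i)"
        using find_r[OF amono[OF et(1)], of t] a0[OF et(1)] aN[OF et(1)] et by auto
      have "(e, i) \<in> E'" using i et unfolding E'_def by auto
      moreover have "dslope G F x d = of_int (M e i)"
        unfolding dslope_def param_def EPt b using rs[OF et(1) i] True by simp
      ultimately show ?thesis by (intro bexI[of _ "(e, i)"]) (simp_all add: \<sigma>_def)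
    next
      case False
      obtain i where i: "i < N e" "a e i < t" "t \<le> a e (Suc i)"
        using find_l[OF amono[OF et(1)], of t] a0[OF et(1)] aN[OF et(1)] et by auto
      have "(e, i) \<in> E'" using i et unfolding E'_def by auto
      moreover have "dslope G F x d = - of_int (M e i)"
        unfolding dslope_def param_def EPt b using ls[OF et(1) i] False by simp
      ultimately show ?thesis by (intro bexI[of _ "(e, i)"]) (simp_all add: \<sigma>_def)
    qed
  qed
  show ?thesis
  proof
    show "\<forall>x\<in>points G. \<forall>d\<in>tdirs G x. \<bar>dslope G F x d\<bar> \<le> of_int (2 * genus G - 1)"
    proof (intro ballI)
      fix x d assume "x \<in> points G" "d \<in> tdirs G x"
      then obtain q where q: "q \<in> E'" "\<bar>dslope G F x d\<bar> = of_int \<bar>\<sigma> q\<bar>" using bound by blast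
      have "\<bar>\<sigma> q\<bar> \<le> 2 * genus G - 1" using CB[OF q(1)] gen by simp
      then show "\<bar>dslope G F x d\<bar> \<le> of_int (2 * genus G - 1)" unfolding q(2) by linarith
    qed
    show "(\<forall>x\<in>points G. canon G x \<ge> 0) \<longrightarrow>
          (\<forall>x\<in>points G. \<forall>d\<in>tdirs G x. \<bar>dslope G F x d\<bar> \<le> of_int (2 * genus G - 2))"
    proof (intro impI ballI)
      assume Kh: "\<forall>x\<in>points G. canon G x \<ge> 0"
      fix x d assume "x \<in> points G" "d \<in> tdirs G x"
      then obtain q where q: "q \<in> E'" "\<bar>dslope G F x d\<bar> = of_int \<bar>\<sigma> q\<bar>" using bound by blast
      have "\<bar>\<sigma> q\<bar> \<le> 2 * genus G - 2" using CB[OF q(1)] K'[OF Kh] gen by simp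
      then show "\<bar>dslope G F x d\<bar> \<le> of_int (2 * genus G - 2)" unfolding q(2) by linarith
    qed
  qed
qed


end
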